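(* Let $n\ge 1$ and $k\ge 2$ be integers, and let $A\subseteq\mathbb{Z}_{2n}$ with $|A|\ge n+k$. Then $\Sigma_k(A)=\mathbb{Z}_{2n}$.
   Context: For a finite set $A\subseteq\mathbb{Z}_m$ and an integer $1\le k\le |A|$, $\Sigma_k(A)$ (written $A\psi^{k-1}A$ in the paper) denotes the set of all elements of $\mathbb{Z}_m$ that can be written as a sum of $k$ distinct elements of $A$. *)

theory Defs
  imports Main
begin

definition Zmod :: "int \<Rightarrow> int set" where
  "Zmod m = {0..<m}"

definition restricted_sumset :: "int \<Rightarrow> nat \<Rightarrow> int set \<Rightarrow> int set" where
  "restricted_sumset m k A = {(\<Sum>B) mod m | B. B \<subseteq> A \<and> card B = k}"

end

theory Submission
  imports Defs
begin

lemma dvd_small: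
  fixes m d :: int
  assumes "m \<ge> 1" "m dvd d" "0 \<le> d" "d < 2*m"
  shows "d = 0 \<or> d = m"
proof -
  obtain q where q: "d = m*q" using assms(2) by (auto elim: dvdE)
  have m0: "m > 0" using assms by simp
  have "q \<ge> 0"
  proof (rule ccontr)
    assume "\<not> q \<ge> 0"
    hence "m*q < 0" using m0 by (simp add: mult_pos_neg)
    thus False using q assms by simp
  qed
  moreover have "q < 2"
  proof (rule ccontr)
    assume "\<not> q < 2"
    hence "m*2 \<le> m*q" using m0 by (intro mult_left_mono) auto
    hence "2*m \<le> d" using q by (simp add: mult.commute)
    thus False using assms by linarith
  qed
  ultimately have "q = 0 \<or> q = 1" by auto
  thus ?thesis using q by auto
qed

lemma pair:
  fixes N m y :: int and A :: "int set"
  assumes N: "N = 2*m" and AN: "A \<subseteq> {0..<N}" and cA: "card A \<ge> nat m + 2" and m1: "m \<ge> 1"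
  shows "\<exists>a\<in>A. \<exists>b\<in>A. a \<noteq> b \<and> (a+b) mod N = y mod N"
proof (rule ccontr)
  assume H: "\<not> ?thesis"
  define f where "f a = (y - a) mod N" for a
  have Npos: "N > 0" using N m1 by simp
  have fin: "finite A" using AN finite_subset by blast
  have fA: "f a = a" if "a \<in> A" "f a \<in> A" for a
  proof (rule ccontr)
    assume ne: "f a \<noteq> a"
    have e: "(a + f a) mod N = y mod N" by (simp add: f_def mod_add_right_eq)
    have "\<exists>a\<in>A. \<exists>b\<in>A. a \<noteq> b \<and> (a+b) mod N = y mod N"
      using that ne e by (intro bexI[of _ a] bexI[of _ "f a"]) auto
    thus False using H by simp
  qed
  have ff: "f (f a) = a" if "a \<in> {0..<N}" for a
  proof -
    have "f (f a) = (y - (y - a)) mod N" unfolding f_def by (simp add: mod_diff_right_eq)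
    also have "\<dots> = a" using that by simp
    finally show ?thesis .
  qed
  have inj: "inj_on f {0..<N}" by (rule inj_onI) (metis ff)
  define F where "F = {a\<in>A. f a = a}"
  define G where "G = A - F"
  have fG: "f ` G \<subseteq> {0..<N} - A"
  proof
    fix z assume "z \<in> f ` G"
    then obtain a where a: "a \<in> G" "z = f a" by auto
    have "z \<in> {0..<N}" using a Npos by (simp add: f_def)
    moreover have "z \<notin> A" using a fA unfolding G_def F_def by auto
    ultimately show "z \<in> {0..<N} - A" by simp
  qed
  have "card (f ` G) = card G"
    by (rule card_image, rule inj_on_subset[OF inj], use AN G_def in auto)
  hence cG: "card G \<le> card ({0..<N} - A)"
    using fG by (metis card_mono finite_Diff finite_atLeastLessThan_int)
  have "card ({0..<N} - A) = nat N - card A"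
    using AN by (simp add: card_Diff_subset fin)
  hence cG2: "card G \<le> nat N - card A" using cG by simp
  have cF: "card F \<le> 2"
  proof (cases "F = {}")
    case True thus ?thesis by simp
  next
    case False
    have finF: "finite F" using fin F_def by simp
    define a0 where "a0 = Min F"
    have a0F: "a0 \<in> F" using False finF a0_def by simp
    have "F \<subseteq> {a0, a0 + m}"
    proof
      fix b assume bF: "b \<in> F"
      have "a0 \<le> b" using bF finF a0_def by simp
      have eq: "(y - c) mod N = c" if "c \<in> F" for c using that F_def f_def by simp
      have dv: "N dvd (y - c - c)" if "c \<in> F" for c
      proof -
        have "c mod N = c" using that AN F_def by auto
        hence "(y - c) mod N = c mod N" using eq[OF that] by simp
        thus ?thesis by (simp add: mod_eq_dvd_iff)
      qed
      have d1: "N dvd (y - a0 - a0)" by (rule dv[OF a0F])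
      have d2: "N dvd (y - b - b)" by (rule dv[OF bF])
      have "N dvd (y - a0 - a0) - (y - b - b)" using d1 d2 by (rule dvd_diff)
      moreover have "(y - a0 - a0) - (y - b - b) = 2*(b - a0)" by simp
      ultimately have "2*m dvd 2*(b - a0)" using N by simp
      hence md: "m dvd (b - a0)" using dvd_mult_cancel_left[of 2 m "b - a0"] by simp
      have "b < N" "a0 \<ge> 0" using bF a0F AN F_def by auto
      hence "b - a0 < 2*m" "0 \<le> b - a0" using N \<open>a0 \<le> b\<close> by auto
      hence "b - a0 = 0 \<or> b - a0 = m"
        using dvd_small[OF m1 md] by blast
      thus "b \<in> {a0, a0 + m}" by auto
    qed
    hence "card F \<le> card {a0, a0 + m}" by (simp add: card_mono)
    also have "\<dots> \<le> 2" by (simp add: card_insert_le_m1)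
    finally show ?thesis .
  qed
  have FA: "F \<subseteq> A" using F_def by auto
  have finF: "finite F" using fin FA finite_subset by blast
  have "card G = card A - card F" unfolding G_def using FA finF by (simp add: card_Diff_subset)
  moreover have "card F \<le> card A" using FA fin by (simp add: card_mono)
  ultimately have "card A = card F + card G" by simp
  hence "card A \<le> 2 + (nat N - card A)" using cF cG2 by linarith
  moreover have "nat N = 2 * nat m" using N m1 by simp
  moreover have "nat m \<ge> 1" using m1 by simp
  ultimately show False using cA by arith
qed

theorem mainTheorem10:
  fixes n k :: nat and A :: "int set"
  assumes "n \<ge> 1" and "k \<ge> 2"
    and "A \<subseteq> Zmod (2 * int n)"
    and "card A \<ge> n + k"
  shows "restricted_sumset (2 * int n) k A = Zmod (2 * int n)"
proof
  have Npos: "2 * int n > 0" using assms by simp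
  show "restricted_sumset (2 * int n) k A \<subseteq> Zmod (2 * int n)"
    unfolding restricted_sumset_def Zmod_def using Npos by auto
  show "Zmod (2 * int n) \<subseteq> restricted_sumset (2 * int n) k A"
  proof
    fix x assume x: "x \<in> Zmod (2 * int n)"
    have fin: "finite A" using assms(3) unfolding Zmod_def using finite_subset by blast
    have "k - 2 \<le> card A" using assms(4) by simp
    then obtain C where C: "C \<subseteq> A" "card C = k - 2"
      by (rule obtain_subset_with_card_n) blast
    have finC: "finite C" using C fin finite_subset by blast
    define A' where "A' = A - C"
    have cA': "card A' = card A - (k - 2)" using C fin A'_def by (simp add: card_Diff_subset finC)
    have "card A' \<ge> nat (int n) + 2" using cA' assms by simp
    moreover have "A' \<subseteq> {0..<2 * int n}" using assms(3) A'_def Zmod_def by auto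
    ultimately obtain a b where ab: "a \<in> A'" "b \<in> A'" "a \<noteq> b"
        "(a+b) mod (2 * int n) = (x - \<Sum>C) mod (2 * int n)"
      using pair[of "2 * int n" "int n" A' "x - \<Sum>C"] assms(1) by auto
    define B where "B = insert a (insert b C)"
    have "a \<notin> C" "b \<notin> C" using ab A'_def by auto
    hence cB: "card B = k" using B_def finC ab(3) C(2) assms(2) by simp
    have sB: "\<Sum>B = (a + b) + \<Sum>C" using B_def finC \<open>a \<notin> C\<close> \<open>b \<notin> C\<close> ab(3) by simp
    have "(\<Sum>B) mod (2 * int n) = ((a+b) mod (2 * int n) + \<Sum>C) mod (2 * int n)"
      by (simp add: sB mod_add_left_eq)
    also have "\<dots> = ((x - \<Sum>C) + \<Sum>C) mod (2 * int n)"
      by (simp add: ab(4) mod_add_left_eq)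
    also have "\<dots> = x" using x Zmod_def by simp
    finally have "(\<Sum>B) mod (2 * int n) = x" .
    moreover have "B \<subseteq> A" using B_def ab A'_def C by auto
    ultimately show "x \<in> restricted_sumset (2 * int n) k A"
      unfolding restricted_sumset_def using cB by blast
  qed
qed

end
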